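(* Let $S$ be a finite nonempty set of natural numbers. (1) If $S$ has type $(p,q)$ with $p\geq3$, then some subset of $S$ of cardinality $|S|-1$ has type $(p-1,q)$; symmetrically, if $q\geq 3$ some subset of cardinality $|S|-1$ has type $(p,q-1)$. (2) If $S$ has type $(2,q)$, then some subset of $S$ of cardinality $|S|-1$ is a caterpillar or has a type $(p',q')$ with $p'+q'\leq q$; symmetrically, if $S$ has type $(p,2)$, some subset of cardinality $|S|-1$ is a caterpillar or has a type $(p',q')$ with $p'+q'\leq p$. (3) If $S$ has type $(p,q)$ with $p+q<|S|$, then some subset of $S$ of cardinality $|S|-1$ also has type $(p,q)$. (4) The caterpillars are exactly the finite subsets of $\mathbb N$ having no subset of type $(2,2)$.
   Context: For $m\in\mathbb N$ let $d(m)$ be the finite set of integers with $m=\sum_{i\in d(m)}2^i$. For a finite $S\subset\mathbb N$ with $|S|\geq2$, $s(S)=\max\{i:\exists x,y\in S,\ i\in d(x)\setminus d(y)\}$; with $S_0=\{x\in S:s(S)\notin d(x)\}$, $S_1=\{x\in S:s(S)\in d(x)\}$ (both nonempty), $(S_0,S_1)$ is the split of $S$, written $S=(S_0,S_1)$. Caterpillars: the empty set and singletons are caterpillars; a finite $S$ with $|S|\geq 2$ and split $(S_0,S_1)$ is a caterpillar iff one of $S_0,S_1$ is a singleton and the other a caterpillar. Every finite $S\subset\mathbb N$ that is not a caterpillar, with split $(L,R)$, has a type $t(S)\in\mathbb N\times\mathbb N$ defined recursively: $t(S)=(|L|,|R|)$ if $|L|,|R|\geq 2$; $t(S)=t(L)$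 if $|R|=1$; $t(S)=t(R)$ if $|L|=1$. *)

theory Defs
  imports Main
begin

definition digits :: "nat \<Rightarrow> nat set" where
  "digits m = {i. bit m i}"

definition split_pos :: "nat set \<Rightarrow> nat" where
  "split_pos S = Max {i. \<exists>x\<in>S. \<exists>y\<in>S. i \<in> digits x - digits y}"

definition split0 :: "nat set \<Rightarrow> nat set" where
  "split0 S = {x\<in>S. split_pos S \<notin> digits x}"

definition split1 :: "nat set \<Rightarrow> nat set" where
  "split1 S = {x\<in>S. split_pos S \<in> digits x}"

inductive caterpillar :: "nat set \<Rightarrow> bool" where
  cat_empty: "caterpillar {}"
| cat_single: "caterpillar {x}"
| cat_left: "\<lbrakk>finite S; card S \<ge> 2; card (split0 S) = 1; caterpillar (split1 S)\<rbrakk>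
              \<Longrightarrow> caterpillar S"
| cat_right: "\<lbrakk>finite S; card S \<ge> 2; card (split1 S) = 1; caterpillar (split0 S)\<rbrakk>
              \<Longrightarrow> caterpillar S"

text \<open>has_type S t means t(S) = t (defined only for non-caterpillars).\<close>
inductive has_type :: "nat set \<Rightarrow> nat \<times> nat \<Rightarrow> bool" where
  ty_base: "\<lbrakk>finite S; card S \<ge> 2; card (split0 S) \<ge> 2; card (split1 S) \<ge> 2\<rbrakk>
              \<Longrightarrow> has_type S (card (split0 S), card (split1 S))"
| ty_left: "\<lbrakk>finite S; card S \<ge> 2; card (split1 S) = 1; has_type (split0 S) t\<rbrakk>
              \<Longrightarrow> has_type S t"
| ty_right: "\<lbrakk>finite S; card S \<ge> 2; card (split0 S) = 1; has_type (split1 S) t\<rbrakk>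
              \<Longrightarrow> has_type S t"

end

theory Submission imports Defs begin
lemma bit_lt: "bit (m::nat) i \<Longrightarrow> i < m"
proof (rule ccontr)
  assume b: "bit m i" and "\<not> i < m"
  then have "m < 2^i" using less_exp[of i] by linarith
  then have "m div 2^i = 0" by simp
  with b show False by (simp add: bit_nat_def)
qed

definition dset :: "nat set \<Rightarrow> nat set" where
  "dset S = {i. \<exists>x\<in>S. \<exists>y\<in>S. i \<in> digits x - digits y}"

lemma dset_finite: "finite S \<Longrightarrow> finite (dset S)"
proof -
  assume f: "finite S"
  have "dset S \<subseteq> {..< Max S}"
  proof
    fix i assume "i \<in> dset S"
    then obtain x where "x \<in> S" "bit x i" by (auto simp: dset_def digits_def)
    then show "i \<in> {..<Max S}" using bit_lt[of x i] Max_ge[OF f, of x] by auto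
  qed
  then show ?thesis using finite_subset by blast
qed

lemma dset_ne: "finite S \<Longrightarrow> card S \<ge> 2 \<Longrightarrow> dset S \<noteq> {}"
proof -
  assume "finite S" "card S \<ge> 2"
  then have "\<exists>x\<in>S. \<exists>y\<in>S. x \<noteq> y" using card_le_Suc0_iff_eq by fastforce
  then obtain x y where xy: "x \<in> S" "y \<in> S" "x \<noteq> y" by blast
  then obtain i where "bit x i \<noteq> bit y i" using bit_eq_iff by blast
  then show ?thesis using xy by (auto simp: dset_def digits_def)
qed

lemma split_pos_dset: "split_pos S = Max (dset S)"
  by (simp add: split_pos_def dset_def)

lemma split_pos_mem: "finite S \<Longrightarrow> card S \<ge> 2 \<Longrightarrow> \<exists>x\<in>S. \<exists>y\<in>S. split_pos S \<in> digits x - digits y"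
proof -
  assume a: "finite S" "card S \<ge> 2"
  have "Max (dset S) \<in> dset S" by (rule Max_in[OF dset_finite[OF a(1)] dset_ne[OF a]])
  then show ?thesis by (simp add: split_pos_dset dset_def)
qed

lemma split_ne: "finite S \<Longrightarrow> card S \<ge> 2 \<Longrightarrow> split0 S \<noteq> {} \<and> split1 S \<noteq> {}"
  using split_pos_mem unfolding split0_def split1_def by blast

lemma split_un: "split0 S \<union> split1 S = S" "split0 S \<inter> split1 S = {}"
  "split0 S \<subseteq> S" "split1 S \<subseteq> S"
  by (auto simp: split0_def split1_def)

lemma split_card: "finite S \<Longrightarrow> card (split0 S) + card (split1 S) = card S"
  by (metis card_Un_disjoint finite_subset split_un)

lemma split_sub:
  assumes f: "finite S" and c: "card S \<ge> 2" and T: "T \<subseteq> S"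
    and n0: "T \<inter> split0 S \<noteq> {}" and n1: "T \<inter> split1 S \<noteq> {}"
  shows "split0 T = T \<inter> split0 S" "split1 T = T \<inter> split1 S"
proof -
  have sub: "dset T \<subseteq> dset S" using T by (auto simp: dset_def)
  have fin: "finite (dset T)" using dset_finite f T finite_subset by blast
  have mem: "split_pos S \<in> dset T" using n0 n1 by (auto simp: dset_def split0_def split1_def)
  have "Max (dset T) = split_pos S"
  proof (rule Max_eqI[OF fin])
    show "split_pos S \<in> dset T" by (rule mem)
    fix y assume "y \<in> dset T"
    then show "y \<le> split_pos S" using sub Max_ge dset_finite[OF f] split_pos_dset by (metis subsetD)
  qed
  then have "split_pos T = split_pos S" by (simp add: split_pos_dset)
  then show "split0 T = T \<inter> split0 S" "split1 T = T \<inter> split1 S"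
    using T by (auto simp: split0_def split1_def)
qed

lemma rm0:
  assumes f: "finite S" and c: "card S \<ge> 2" and x: "x \<in> split0 S" and ne: "split0 S - {x} \<noteq> {}"
  shows "split0 (S - {x}) = split0 S - {x}" "split1 (S - {x}) = split1 S"
proof -
  have d: "x \<notin> split1 S" using x split_un(2) by blast
  have n1: "split1 S \<noteq> {}" using split_ne f c by blast
  have a: "(S - {x}) \<inter> split0 S = split0 S - {x}" "(S - {x}) \<inter> split1 S = split1 S"
    using split_un d by auto
  show "split0 (S - {x}) = split0 S - {x}" "split1 (S - {x}) = split1 S"
    using split_sub[OF f c, of "S - {x}"] a ne n1 by auto
qed

lemma rm1:
  assumes f: "finite S" and c: "card S \<ge> 2" and x: "x \<in> split1 S" and ne: "split1 S - {x} \<noteq> {}"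
  shows "split0 (S - {x}) = split0 S" "split1 (S - {x}) = split1 S - {x}"
proof -
  have d: "x \<notin> split0 S" using x split_un(2) by blast
  have n0: "split0 S \<noteq> {}" using split_ne f c by blast
  have a: "(S - {x}) \<inter> split0 S = split0 S" "(S - {x}) \<inter> split1 S = split1 S - {x}"
    using split_un d by auto
  show "split0 (S - {x}) = split0 S" "split1 (S - {x}) = split1 S - {x}"
    using split_sub[OF f c, of "S - {x}"] a ne n0 by auto
qed

lemma ty_basic: "has_type S t \<Longrightarrow> finite S \<and> card S \<ge> 2"
  by (induction rule: has_type.induct) auto

lemma ty_sum: "has_type S (p,q) \<Longrightarrow> p + q \<le> card S"
proof (induction S "(p,q)" rule: has_type.induct)
  case (ty_base S) then show ?case using split_card[of S] by simp
next
  case (ty_left S) then show ?case using split_card[of S] by simp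
next
  case (ty_right S) then show ?case using split_card[of S] by simp
qed

lemma ty_ge2: "has_type S (p,q) \<Longrightarrow> p \<ge> 2 \<and> q \<ge> 2"
  by (induction S "(p,q)" rule: has_type.induct) auto

lemma card1_eq: "card A = 1 \<Longrightarrow> \<exists>a. A = {a}"
  by (simp add: card_1_singleton_iff)

lemma cat_sub: "caterpillar S \<Longrightarrow> T \<subseteq> S \<Longrightarrow> caterpillar T"
proof (induction arbitrary: T rule: caterpillar.induct)
  case cat_empty then show ?case by (simp add: caterpillar.cat_empty)
next
  case (cat_single x) then show ?case
    by (metis caterpillar.cat_empty caterpillar.cat_single subset_singletonD)
next
  case (cat_left S)
  obtain a where a: "split0 S = {a}" using card1_eq cat_left.hyps(3) by blast
  show ?case
  proof (cases "a \<in> T")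
    case False
    then have "T \<subseteq> split1 S" using cat_left.prems a split_un(1)[of S] by auto
    then show ?thesis using cat_left.IH by blast
  next
    case True
    show ?thesis
    proof (cases "T \<inter> split1 S = {}")
      case True
      then have "T = {a}" using \<open>a \<in> T\<close> cat_left.prems a split_un(1)[of S] by auto
      then show ?thesis by (simp add: caterpillar.cat_single)
    next
      case False
      have n0: "T \<inter> split0 S \<noteq> {}" using a \<open>a \<in> T\<close> by blast
      note ss = split_sub[OF cat_left.hyps(1,2) cat_left.prems n0 False]
      have fT: "finite T" using cat_left.prems cat_left.hyps(1) finite_subset by blast
      have c0: "card (split0 T) = 1" using ss(1) a \<open>a \<in> T\<close> by simp
      have "card (split1 T) \<ge> 1" using ss(2) False fT by (simp add: card_gt_0_iff Suc_le_eq)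
      then have cT: "card T \<ge> 2" using split_card[OF fT] c0 by simp
      have "caterpillar (split1 T)" using cat_left.IH ss(2) by blast
      then show ?thesis using caterpillar.cat_left[OF fT cT c0] by blast
    qed
  qed
next
  case (cat_right S)
  obtain a where a: "split1 S = {a}" using card1_eq cat_right.hyps(3) by blast
  show ?case
  proof (cases "a \<in> T")
    case False
    then have "T \<subseteq> split0 S" using cat_right.prems a split_un(1)[of S] by auto
    then show ?thesis using cat_right.IH by blast
  next
    case True
    show ?thesis
    proof (cases "T \<inter> split0 S = {}")
      case True
      then have "T = {a}" using \<open>a \<in> T\<close> cat_right.prems a split_un(1)[of S] by auto
      then show ?thesis by (simp add: caterpillar.cat_single)
    next
      case False
      have n1: "T \<inter> split1 S \<noteq> {}" using a \<open>a \<in> T\<close> by blast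
      note ss = split_sub[OF cat_right.hyps(1,2) cat_right.prems False n1]
      have fT: "finite T" using cat_right.prems cat_right.hyps(1) finite_subset by blast
      have c1: "card (split1 T) = 1" using ss(2) a \<open>a \<in> T\<close> by simp
      have "card (split0 T) \<ge> 1" using ss(1) False fT by (simp add: card_gt_0_iff Suc_le_eq)
      then have cT: "card T \<ge> 2" using split_card[OF fT] c1 by simp
      have "caterpillar (split0 T)" using cat_right.IH ss(1) by blast
      then show ?thesis using caterpillar.cat_right[OF fT cT c1] by blast
    qed
  qed
qed

lemma cat_not_ty: "has_type S t \<Longrightarrow> \<not> caterpillar S"
proof (induction rule: has_type.induct)
  case (ty_base S)
  then show ?case by (auto elim: caterpillar.cases)
next
  case (ty_left S t)
  have "card (split0 S) \<ge> 2" using ty_basic[OF ty_left.hyps(4)] by simp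
  then show ?case using ty_left by (auto elim: caterpillar.cases)
next
  case (ty_right S t)
  have "card (split1 S) \<ge> 2" using ty_basic[OF ty_right.hyps(4)] by simp
  then show ?case using ty_right by (auto elim: caterpillar.cases)
qed

lemma ty_exists: "finite S \<Longrightarrow> \<not> caterpillar S \<Longrightarrow> \<exists>t. has_type S t"
proof (induction "card S" arbitrary: S rule: less_induct)
  case less
  have c2: "card S \<ge> 2"
  proof (rule ccontr)
    assume "\<not> card S \<ge> 2"
    then have "card S = 0 \<or> card S = 1" by linarith
    then show False using less.prems
      by (auto simp: card_1_singleton_iff intro: caterpillar.intros)
  qed
  note ne = split_ne[OF less.prems(1) c2]
  have f0: "finite (split0 S)" "finite (split1 S)" using less.prems(1) split_un finite_subset by metis+
  have g0: "card (split0 S) \<ge> 1" "card (split1 S) \<ge> 1" using ne f0 by (simp_all add: card_gt_0_iff Suc_le_eq)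
  note sc = split_card[OF less.prems(1)]
  show ?case
  proof (cases "card (split0 S) = 1")
    case True
    then have nc: "\<not> caterpillar (split1 S)" using less.prems c2 caterpillar.cat_left by blast
    have "card (split1 S) < card S" using sc True by simp
    then obtain t where "has_type (split1 S) t" using less.hyps f0 nc by blast
    then show ?thesis using ty_right less.prems(1) c2 True by blast
  next
    case F0: False
    show ?thesis
    proof (cases "card (split1 S) = 1")
      case True
      then have nc: "\<not> caterpillar (split0 S)" using less.prems c2 caterpillar.cat_right by blast
      have "card (split0 S) < card S" using sc True by simp
      then obtain t where "has_type (split0 S) t" using less.hyps f0 nc by blast
      then show ?thesis using ty_left less.prems(1) c2 True by blast
    next
      case False
      then show ?thesis using ty_base less.prems(1) c2 F0 g0 by (metis le_antisym not_less_eq_eq numeral_2_eq_2 One_nat_def)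
    qed
  qed
qed

lemma ty_ne: "has_type A t \<Longrightarrow> A \<noteq> {} \<and> finite A \<and> card A \<ge> 2"
  using ty_basic by fastforce

lemma card_rm: "finite S \<Longrightarrow> x \<in> S \<Longrightarrow> card (S - {x}) = card S - 1"
  by simp

lemma lem1a: "has_type S (p,q) \<Longrightarrow> p \<ge> 3 \<Longrightarrow> \<exists>x\<in>S. has_type (S - {x}) (p - 1, q)"
proof (induction S "(p,q)" rule: has_type.induct)
  case (ty_base S)
  note ne = split_ne[OF ty_base.hyps(1,2)]
  obtain x where x: "x \<in> split0 S" using ne by blast
  have f0: "finite (split0 S)" using ty_base.hyps(1) split_un finite_subset by metis
  have "card (split0 S - {x}) \<ge> 2" using ty_base x f0 by simp
  then have nx: "split0 S - {x} \<noteq> {}" by (metis card.empty not_numeral_le_zero)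
  note r = rm0[OF ty_base.hyps(1,2) x nx]
  have xS: "x \<in> S" using x split_un by blast
  have fT: "finite (S - {x})" using ty_base.hyps(1) by simp
  have "card S = p + q" using split_card[OF ty_base.hyps(1)] ty_base by simp
  then have cT: "card (S - {x}) \<ge> 2" using card_rm[OF ty_base.hyps(1) xS] ty_base by simp
  have c0: "card (split0 (S - {x})) = p - 1" using r(1) ty_base x f0 by simp
  have c1: "card (split1 (S - {x})) = q" using r(2) ty_base by simp
  have "has_type (S - {x}) (card (split0 (S - {x})), card (split1 (S - {x})))"
    by (rule has_type.ty_base[OF fT cT]) (use c0 c1 ty_base in auto)
  then show ?case using c0 c1 xS by auto
next
  case (ty_left S)
  then obtain x where x: "x \<in> split0 S" and h: "has_type (split0 S - {x}) (p - 1, q)" by blast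
  have nx: "split0 S - {x} \<noteq> {}" using ty_ne[OF h] by blast
  note r = rm0[OF ty_left.hyps(1,2) x nx]
  have xS: "x \<in> S" using x split_un by blast
  have fT: "finite (S - {x})" using ty_left.hyps(1) by simp
  have "card S = card (split0 S) + 1" using split_card[OF ty_left.hyps(1)] ty_left by simp
  moreover have "card (split0 S) \<ge> 2" using ty_ne[OF ty_left.hyps(4)] by blast
  ultimately have cT: "card (S - {x}) \<ge> 2" using card_rm[OF ty_left.hyps(1) xS] by simp
  have "has_type (S - {x}) (p - 1, q)"
    by (rule has_type.ty_left[OF fT cT]) (use r ty_left.hyps h in auto)
  then show ?case using xS by blast
next
  case (ty_right S)
  then obtain x where x: "x \<in> split1 S" and h: "has_type (split1 S - {x}) (p - 1, q)" by blast
  have nx: "split1 S - {x} \<noteq> {}" using ty_ne[OF h] by blast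
  note r = rm1[OF ty_right.hyps(1,2) x nx]
  have xS: "x \<in> S" using x split_un by blast
  have fT: "finite (S - {x})" using ty_right.hyps(1) by simp
  have "card S = card (split1 S) + 1" using split_card[OF ty_right.hyps(1)] ty_right by simp
  moreover have "card (split1 S) \<ge> 2" using ty_ne[OF ty_right.hyps(4)] by blast
  ultimately have cT: "card (S - {x}) \<ge> 2" using card_rm[OF ty_right.hyps(1) xS] by simp
  have "has_type (S - {x}) (p - 1, q)"
    by (rule has_type.ty_right[OF fT cT]) (use r ty_right.hyps h in auto)
  then show ?case using xS by blast
qed
lemma lem1b: "has_type S (p,q) \<Longrightarrow> q \<ge> 3 \<Longrightarrow> \<exists>x\<in>S. has_type (S - {x}) (p, q - 1)"
proof (induction S "(p,q)" rule: has_type.induct)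
  case (ty_base S)
  note ne = split_ne[OF ty_base.hyps(1,2)]
  obtain x where x: "x \<in> split1 S" using ne by blast
  have f0: "finite (split1 S)" using ty_base.hyps(1) split_un finite_subset by metis
  have "card (split1 S - {x}) \<ge> 2" using ty_base x f0 by simp
  then have nx: "split1 S - {x} \<noteq> {}" by (metis card.empty not_numeral_le_zero)
  note r = rm1[OF ty_base.hyps(1,2) x nx]
  have xS: "x \<in> S" using x split_un by blast
  have fT: "finite (S - {x})" using ty_base.hyps(1) by simp
  have "card S = p + q" using split_card[OF ty_base.hyps(1)] ty_base by simp
  then have cT: "card (S - {x}) \<ge> 2" using card_rm[OF ty_base.hyps(1) xS] ty_base by simp
  have c1: "card (split1 (S - {x})) = q - 1" using r(2) ty_base x f0 by simp
  have c0: "card (split0 (S - {x})) = p" using r(1) ty_base by simp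
  have "has_type (S - {x}) (card (split0 (S - {x})), card (split1 (S - {x})))"
    by (rule has_type.ty_base[OF fT cT]) (use c0 c1 ty_base in auto)
  then show ?case using c0 c1 xS by auto
next
  case (ty_left S)
  then obtain x where x: "x \<in> split0 S" and h: "has_type (split0 S - {x}) (p, q - 1)" by blast
  have nx: "split0 S - {x} \<noteq> {}" using ty_ne[OF h] by blast
  note r = rm0[OF ty_left.hyps(1,2) x nx]
  have xS: "x \<in> S" using x split_un by blast
  have fT: "finite (S - {x})" using ty_left.hyps(1) by simp
  have "card S = card (split0 S) + 1" using split_card[OF ty_left.hyps(1)] ty_left by simp
  moreover have "card (split0 S) \<ge> 2" using ty_ne[OF ty_left.hyps(4)] by blast
  ultimately have cT: "card (S - {x}) \<ge> 2" using card_rm[OF ty_left.hyps(1) xS] by simp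
  have "has_type (S - {x}) (p, q - 1)"
    by (rule has_type.ty_left[OF fT cT]) (use r ty_left.hyps h in auto)
  then show ?case using xS by blast
next
  case (ty_right S)
  then obtain x where x: "x \<in> split1 S" and h: "has_type (split1 S - {x}) (p, q - 1)" by blast
  have nx: "split1 S - {x} \<noteq> {}" using ty_ne[OF h] by blast
  note r = rm1[OF ty_right.hyps(1,2) x nx]
  have xS: "x \<in> S" using x split_un by blast
  have fT: "finite (S - {x})" using ty_right.hyps(1) by simp
  have "card S = card (split1 S) + 1" using split_card[OF ty_right.hyps(1)] ty_right by simp
  moreover have "card (split1 S) \<ge> 2" using ty_ne[OF ty_right.hyps(4)] by blast
  ultimately have cT: "card (S - {x}) \<ge> 2" using card_rm[OF ty_right.hyps(1) xS] by simp
  have "has_type (S - {x}) (p, q - 1)"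
    by (rule has_type.ty_right[OF fT cT]) (use r ty_right.hyps h in auto)
  then show ?case using xS by blast
qed


definition good :: "nat \<Rightarrow> nat set \<Rightarrow> bool" where
  "good q T \<longleftrightarrow> caterpillar T \<or> (\<exists>p' q'. has_type T (p', q') \<and> p' + q' \<le> q)"

lemma good_up0:
  assumes f: "finite S" and c: "card S \<ge> 2" and c1: "card (split1 S) = 1"
    and x: "x \<in> split0 S" and c0: "card (split0 S) \<ge> 2" and g: "good q (split0 S - {x})"
  shows "good q (S - {x})"
proof -
  have f0: "finite (split0 S)" using f split_un finite_subset by metis
  have "card (split0 S - {x}) \<ge> 1" using c0 f0 x by simp
  then have nx: "split0 S - {x} \<noteq> {}" by (metis card.empty not_one_le_zero)
  note r = rm0[OF f c x nx]
  have xS: "x \<in> S" using x split_un by blast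
  have fT: "finite (S - {x})" using f by simp
  have "card S = card (split0 S) + 1" using split_card[OF f] c1 by simp
  then have cT: "card (S - {x}) \<ge> 2" using card_rm[OF f xS] c0 by simp
  show ?thesis
  proof (cases "caterpillar (split0 S - {x})")
    case True
    then show ?thesis unfolding good_def using cat_right[OF fT cT] r c1 by auto
  next
    case False
    then obtain p' q' where "has_type (split0 S - {x}) (p', q')" "p' + q' \<le> q" using g good_def by blast
    then show ?thesis unfolding good_def using ty_left[OF fT cT] r c1 by auto
  qed
qed

lemma good_up1:
  assumes f: "finite S" and c: "card S \<ge> 2" and c0: "card (split0 S) = 1"
    and x: "x \<in> split1 S" and c1: "card (split1 S) \<ge> 2" and g: "good q (split1 S - {x})"
  shows "good q (S - {x})"
proof -
  have f1: "finite (split1 S)" using f split_un finite_subset by metis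
  have "card (split1 S - {x}) \<ge> 1" using c1 f1 x by simp
  then have nx: "split1 S - {x} \<noteq> {}" by (metis card.empty not_one_le_zero)
  note r = rm1[OF f c x nx]
  have xS: "x \<in> S" using x split_un by blast
  have fT: "finite (S - {x})" using f by simp
  have "card S = card (split1 S) + 1" using split_card[OF f] c0 by simp
  then have cT: "card (S - {x}) \<ge> 2" using card_rm[OF f xS] c1 by simp
  show ?thesis
  proof (cases "caterpillar (split1 S - {x})")
    case True
    then show ?thesis unfolding good_def using cat_left[OF fT cT] r c0 by auto
  next
    case False
    then obtain p' q' where "has_type (split1 S - {x}) (p', q')" "p' + q' \<le> q" using g good_def by blast
    then show ?thesis unfolding good_def using ty_right[OF fT cT] r c0 by auto
  qed
qed

lemma good_of: "finite A \<Longrightarrow> card A \<le> q \<Longrightarrow> good q A"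
  unfolding good_def using ty_exists ty_sum by (metis order_trans surj_pair)

lemma lem2a: "has_type S (p,q) \<Longrightarrow> p = 2 \<Longrightarrow> \<exists>x\<in>S. good q (S - {x})"
proof (induction S "(p,q)" rule: has_type.induct)
  case (ty_base S)
  note ne = split_ne[OF ty_base.hyps(1,2)]
  obtain x where x: "x \<in> split0 S" using ne by blast
  have xS: "x \<in> S" using x split_un by blast
  have f1: "finite (split1 S)" using ty_base.hyps(1) split_un finite_subset by metis
  have f0: "finite (split0 S)" using ty_base.hyps(1) split_un finite_subset by metis
  have "card (split0 S - {x}) = 1" using ty_base x f0 by simp
  then have nx: "split0 S - {x} \<noteq> {}" by (metis card.empty zero_neq_one)
  note r = rm0[OF ty_base.hyps(1,2) x nx]
  have fT: "finite (S - {x})" using ty_base.hyps(1) by simp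
  have "card S = p + q" using split_card[OF ty_base.hyps(1)] ty_base by simp
  then have cT: "card (S - {x}) \<ge> 2" using card_rm[OF ty_base.hyps(1) xS] ty_base by simp
  have c0: "card (split0 (S - {x})) = 1" using r(1) \<open>card (split0 S - {x}) = 1\<close> by simp
  have g: "good q (split1 S)" using good_of[OF f1] ty_base by simp
  have "good q (S - {x})"
  proof (cases "caterpillar (split1 S)")
    case True
    then show ?thesis unfolding good_def using cat_left[OF fT cT c0] r by auto
  next
    case False
    then obtain p' q' where "has_type (split1 S) (p', q')" "p' + q' \<le> q" using g good_def by blast
    then show ?thesis unfolding good_def using ty_right[OF fT cT c0] r by auto
  qed
  then show ?case using xS by blast
next
  case (ty_left S)
  then obtain x where x: "x \<in> split0 S" and h: "good q (split0 S - {x})" by blast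
  have "x \<in> S" using x split_un by blast
  then show ?case using good_up0[OF ty_left.hyps(1,2,3) x _ h] ty_ne[OF ty_left.hyps(4)] by blast
next
  case (ty_right S)
  then obtain x where x: "x \<in> split1 S" and h: "good q (split1 S - {x})" by blast
  have "x \<in> S" using x split_un by blast
  then show ?case using good_up1[OF ty_right.hyps(1,2,3) x _ h] ty_ne[OF ty_right.hyps(4)] by blast
qed

lemma lem2b: "has_type S (p,q) \<Longrightarrow> q = 2 \<Longrightarrow> \<exists>x\<in>S. good p (S - {x})"
proof (induction S "(p,q)" rule: has_type.induct)
  case (ty_base S)
  note ne = split_ne[OF ty_base.hyps(1,2)]
  obtain x where x: "x \<in> split1 S" using ne by blast
  have xS: "x \<in> S" using x split_un by blast
  have f1: "finite (split1 S)" using ty_base.hyps(1) split_un finite_subset by metis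
  have f0: "finite (split0 S)" using ty_base.hyps(1) split_un finite_subset by metis
  have "card (split1 S - {x}) = 1" using ty_base x f1 by simp
  then have nx: "split1 S - {x} \<noteq> {}" by (metis card.empty zero_neq_one)
  note r = rm1[OF ty_base.hyps(1,2) x nx]
  have fT: "finite (S - {x})" using ty_base.hyps(1) by simp
  have "card S = p + q" using split_card[OF ty_base.hyps(1)] ty_base by simp
  then have cT: "card (S - {x}) \<ge> 2" using card_rm[OF ty_base.hyps(1) xS] ty_base by simp
  have c1: "card (split1 (S - {x})) = 1" using r(2) \<open>card (split1 S - {x}) = 1\<close> by simp
  have g: "good p (split0 S)" using good_of[OF f0] ty_base by simp
  have "good p (S - {x})"
  proof (cases "caterpillar (split0 S)")
    case True
    then show ?thesis unfolding good_def using cat_right[OF fT cT c1] r by auto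
  next
    case False
    then obtain p' q' where "has_type (split0 S) (p', q')" "p' + q' \<le> p" using g good_def by blast
    then show ?thesis unfolding good_def using ty_left[OF fT cT c1] r by auto
  qed
  then show ?case using xS by blast
next
  case (ty_left S)
  then obtain x where x: "x \<in> split0 S" and h: "good p (split0 S - {x})" by blast
  have "x \<in> S" using x split_un by blast
  then show ?case using good_up0[OF ty_left.hyps(1,2,3) x _ h] ty_ne[OF ty_left.hyps(4)] by blast
next
  case (ty_right S)
  then obtain x where x: "x \<in> split1 S" and h: "good p (split1 S - {x})" by blast
  have "x \<in> S" using x split_un by blast
  then show ?case using good_up1[OF ty_right.hyps(1,2,3) x _ h] ty_ne[OF ty_right.hyps(4)] by blast
qed

lemma lem22: "has_type S (p,q) \<Longrightarrow> \<exists>T\<subseteq>S. has_type T (2,2)"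
proof (induction "p+q" arbitrary: S p q rule: less_induct)
  case less
  have g: "p \<ge> 2" "q \<ge> 2" using ty_ge2[OF less.prems] by auto
  show ?case
  proof (cases "p \<ge> 3")
    case True
    then obtain x where "x \<in> S" "has_type (S - {x}) (p - 1, q)" using lem1a less.prems by blast
    moreover have "p - 1 + q < p + q" using True by simp
    ultimately have "\<exists>T\<subseteq>S - {x}. has_type T (2,2)" using less.hyps[of "p - 1" q "S - {x}"] by blast
    then show ?thesis by blast
  next
    case F: False
    show ?thesis
    proof (cases "q \<ge> 3")
      case True
      then obtain x where "x \<in> S" "has_type (S - {x}) (p, q - 1)" using lem1b less.prems by blast
      moreover have "p + (q - 1) < p + q" using True by simp
      ultimately have "\<exists>T\<subseteq>S - {x}. has_type T (2,2)" using less.hyps[of p "q - 1" "S - {x}"] by blast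
      then show ?thesis by blast
    next
      case False
      then have "p = 2" "q = 2" using F g by auto
      then show ?thesis using less.prems by blast
    qed
  qed
qed

lemma part3:
  assumes h: "has_type S (p,q)" and l: "p + q < card S"
  shows "\<exists>T\<subseteq>S. card T = card S - 1 \<and> has_type T (p, q)"
  using h
proof cases
  case ty_base
  then show ?thesis using split_card[of S] l by auto
next
  case ty_left
  have "card (split0 S) = card S - 1" using split_card[of S] ty_left by simp
  then show ?thesis using split_un(3)[of S] ty_left by blast
next
  case ty_right
  have "card (split1 S) = card S - 1" using split_card[of S] ty_right by simp
  then show ?thesis using split_un(4)[of S] ty_right by blast
qed

theorem mainTheorem7:
  fixes S :: "nat set"
  assumes "finite S" and "S \<noteq> {}"
  shows
   "(\<forall>p q. has_type S (p, q) \<and> p \<ge> 3 \<longrightarrow>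
        (\<exists>T\<subseteq>S. card T = card S - 1 \<and> has_type T (p - 1, q))) \<and>
    (\<forall>p q. has_type S (p, q) \<and> q \<ge> 3 \<longrightarrow>
        (\<exists>T\<subseteq>S. card T = card S - 1 \<and> has_type T (p, q - 1))) \<and>
    (\<forall>q. has_type S (2, q) \<longrightarrow>
        (\<exists>T\<subseteq>S. card T = card S - 1 \<and>
            (caterpillar T \<or> (\<exists>p' q'. has_type T (p', q') \<and> p' + q' \<le> q)))) \<and>
    (\<forall>p. has_type S (p, 2) \<longrightarrow>
        (\<exists>T\<subseteq>S. card T = card S - 1 \<and>
            (caterpillar T \<or> (\<exists>p' q'. has_type T (p', q') \<and> p' + q' \<le> p)))) \<and>
    (\<forall>p q. has_type S (p, q) \<and> p + q < card S \<longrightarrow>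
        (\<exists>T\<subseteq>S. card T = card S - 1 \<and> has_type T (p, q))) \<and>
    (caterpillar S \<longleftrightarrow> \<not> (\<exists>T\<subseteq>S. has_type T (2, 2)))"
proof (intro conjI allI impI)
  fix p q assume h: "has_type S (p, q) \<and> p \<ge> 3"
  then obtain x where "x \<in> S" "has_type (S - {x}) (p - 1, q)" using lem1a by blast
  then show "\<exists>T\<subseteq>S. card T = card S - 1 \<and> has_type T (p - 1, q)"
    using assms(1) by (intro exI[of _ "S - {x}"]) auto
next
  fix p q assume h: "has_type S (p, q) \<and> q \<ge> 3"
  then obtain x where "x \<in> S" "has_type (S - {x}) (p, q - 1)" using lem1b by blast
  then show "\<exists>T\<subseteq>S. card T = card S - 1 \<and> has_type T (p, q - 1)"
    using assms(1) by (intro exI[of _ "S - {x}"]) auto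
next
  fix q assume h: "has_type S (2, q)"
  then obtain x where "x \<in> S" "good q (S - {x})" using lem2a by blast
  then show "\<exists>T\<subseteq>S. card T = card S - 1 \<and>
            (caterpillar T \<or> (\<exists>p' q'. has_type T (p', q') \<and> p' + q' \<le> q))"
    using assms(1) unfolding good_def by (intro exI[of _ "S - {x}"]) auto
next
  fix p assume h: "has_type S (p, 2)"
  then obtain x where "x \<in> S" "good p (S - {x})" using lem2b by blast
  then show "\<exists>T\<subseteq>S. card T = card S - 1 \<and>
            (caterpillar T \<or> (\<exists>p' q'. has_type T (p', q') \<and> p' + q' \<le> p))"
    using assms(1) unfolding good_def by (intro exI[of _ "S - {x}"]) auto
next
  fix p q assume h: "has_type S (p, q) \<and> p + q < card S"
  then show "\<exists>T\<subseteq>S. card T = card S - 1 \<and> has_type T (p, q)" using part3 by blast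
next
  show "caterpillar S \<longleftrightarrow> \<not> (\<exists>T\<subseteq>S. has_type T (2, 2))"
  proof
    assume "caterpillar S"
    then show "\<not> (\<exists>T\<subseteq>S. has_type T (2, 2))" using cat_sub cat_not_ty by blast
  next
    assume n: "\<not> (\<exists>T\<subseteq>S. has_type T (2, 2))"
    show "caterpillar S"
    proof (rule ccontr)
      assume "\<not> caterpillar S"
      then obtain p q where "has_type S (p, q)" using ty_exists assms(1) by (metis surj_pair)
      then show False using lem22 n by blast
    qed
  qed
qed

end
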